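(* Let $X$ be a first-countable $T_0$ space such that for every $K\in\mathsf{K}(X)$ the set $\min(K)$ of minimal elements of $K$ is countable. Then the Smyth power space $P_S(X)$ is first-countable.
   Context: The specialization order of $X$ is $x\le y$ iff $x\in\overline{\{y\}}$; saturated sets are upper sets in this order. $\mathsf{K}(X)$ is the set of nonempty compact saturated subsets of $X$; $\min(K)$ is the set of minimal elements of $K$ with respect to the specialization order. For open $U\subseteq X$, $\Box U=\{K\in\mathsf{K}(X):K\subseteq U\}$; the Smyth power space $P_S(X)$ is $\mathsf{K}(X)$ with the topology having base $\{\Box U: U\text{ open}\}$ (upper Vietoris topology). *)

theory Defs
  imports "HOL-Analysis.Analysis"
begin

definition spec_le :: "'a topology \<Rightarrow> 'a \<Rightarrow> 'a \<Rightarrow> bool" where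
  "spec_le X x y \<longleftrightarrow> x \<in> topspace X \<and> y \<in> topspace X \<and> x \<in> X closure_of {y}"

definition saturated_in :: "'a topology \<Rightarrow> 'a set \<Rightarrow> bool" where
  "saturated_in X K \<longleftrightarrow> K \<subseteq> topspace X \<and>
     (\<forall>x\<in>K. \<forall>y\<in>topspace X. spec_le X x y \<longrightarrow> y \<in> K)"

definition KX :: "'a topology \<Rightarrow> 'a set set" where
  "KX X = {K. K \<noteq> {} \<and> compactin X K \<and> saturated_in X K}"

definition min_elems :: "'a topology \<Rightarrow> 'a set \<Rightarrow> 'a set" where
  "min_elems X K = {x \<in> K. \<forall>y\<in>K. spec_le X y x \<longrightarrow> y = x}"

definition box :: "'a topology \<Rightarrow> 'a set \<Rightarrow> 'a set set" where
  "box X U = {K \<in> KX X. K \<subseteq> U}"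

definition smyth :: "'a topology \<Rightarrow> 'a set topology" where
  "smyth X = topology_generated_by {box X U | U. openin X U}"

end

theory Submission
  imports Defs
begin

lemma min_exists:
  assumes t0: "t0_space X" and cC: "compactin X C" and ne: "C \<noteq> {}"
  shows "\<exists>z\<in>C. \<forall>w\<in>C. X closure_of {w} \<subseteq> X closure_of {z} \<longrightarrow> w = z"
proof -
  have Ctop: "C \<subseteq> topspace X" using cC compactin_subset_topspace by blast
  define \<A> where "\<A> = (\<lambda>y. C - X closure_of {y}) ` C"
  have "\<exists>M\<in>\<A>. \<forall>Y\<in>\<A>. M \<subseteq> Y \<longrightarrow> Y = M"
  proof (rule Zorn_Lemma2, intro ballI)
    fix Ch assume Ch: "Ch \<in> chains \<A>"
    show "\<exists>U\<in>\<A>. \<forall>Y\<in>Ch. Y \<subseteq> U"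
    proof (cases "Ch = {}")
      case True then show ?thesis using ne \<A>_def by auto
    next
      case False
      define \<U> where "\<U> = {X closure_of {y} | y. y \<in> C \<and> C - X closure_of {y} \<in> Ch}"
      have "C \<inter> \<Inter>\<U> \<noteq> {}"
      proof (rule cC[unfolded compactin_fip, THEN conjunct2, rule_format], intro conjI allI impI)
        show "\<forall>D\<in>\<U>. closedin X D" unfolding \<U>_def by auto
        fix \<F> assume F: "finite \<F> \<and> \<F> \<subseteq> \<U>"
        show "C \<inter> \<Inter>\<F> \<noteq> {}"
        proof (cases "\<F> = {}")
          case True then show ?thesis using ne by auto
        next
          case False
          define \<G> where "\<G> = (\<lambda>D. C - D) ` \<F>"
          have "\<G> \<subseteq> Ch" using F unfolding \<G>_def \<U>_def by auto
          have ChA: "Ch \<subseteq> \<A>" and Chc: "chain\<^sub>\<subseteq> Ch" using Ch unfolding chains_def by auto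
          have "\<G> \<subseteq> \<A>" using \<open>\<G> \<subseteq> Ch\<close> ChA by (rule order_trans)
          moreover have "chain\<^sub>\<subseteq> \<G>" using Chc \<open>\<G> \<subseteq> Ch\<close> unfolding chain_subset_def by (meson subsetD)
          ultimately have "\<G> \<in> chains \<A>" unfolding chains_def by simp
          hence "subset.chain \<A> \<G>" unfolding chains_alt_def by simp
          moreover have "finite \<G>" "\<G> \<noteq> {}" using F False \<G>_def by auto
          ultimately have "\<Union>\<G> \<in> \<G>" using Union_in_chain by blast
          then obtain D0 where D0: "D0 \<in> \<F>" "\<Union>\<G> = C - D0" using \<G>_def by auto
          have "D0 \<in> \<U>" using D0(1) F by blast
          then obtain y0 where y0: "y0 \<in> C" "D0 = X closure_of {y0}" unfolding \<U>_def by blast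
          have "{y0} \<subseteq> topspace X" using y0(1) Ctop by blast
          hence "{y0} \<subseteq> X closure_of {y0}" by (rule closure_of_subset)
          hence y0D0: "y0 \<in> D0" using y0(2) by blast
          have "y0 \<in> C \<inter> \<Inter>\<F>"
          proof (clarsimp simp: y0(1))
            fix D assume "D \<in> \<F>"
            hence "C - D \<subseteq> C - D0" using D0 \<G>_def by auto
            thus "y0 \<in> D" using y0D0 y0(1) by auto
          qed
          thus ?thesis by blast
        qed
      qed
      then obtain z where z: "z \<in> C" "z \<in> \<Inter>\<U>" by blast
      show ?thesis
      proof (intro bexI ballI)
        show "C - X closure_of {z} \<in> \<A>" using z \<A>_def by auto
        fix Y assume "Y \<in> Ch"
        moreover have "Ch \<subseteq> \<A>" using Ch unfolding chains_def by blast
        ultimately have "Y \<in> \<A>" by blast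
        then obtain y where y: "y \<in> C" "Y = C - X closure_of {y}"
          unfolding \<A>_def by blast
        hence "X closure_of {y} \<in> \<U>" using \<open>Y \<in> Ch\<close> \<U>_def by auto
        hence "z \<in> X closure_of {y}" using z by auto
        hence "X closure_of {z} \<subseteq> X closure_of {y}"
          by (intro closure_of_minimal) auto
        thus "Y \<subseteq> C - X closure_of {z}" using y by auto
      qed
    qed
  qed
  then obtain z where z: "z \<in> C" and mx: "\<forall>Y\<in>\<A>. C - X closure_of {z} \<subseteq> Y \<longrightarrow> Y = C - X closure_of {z}"
    unfolding \<A>_def by auto
  show ?thesis
  proof (intro bexI ballI impI)
    fix w assume w: "w \<in> C" "X closure_of {w} \<subseteq> X closure_of {z}"
    hence "C - X closure_of {w} = C - X closure_of {z}" using mx \<A>_def by auto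
    moreover have "{z} \<subseteq> X closure_of {z}" using z Ctop by (intro closure_of_subset) blast
    moreover hence "z \<in> X closure_of {z}" by blast
    ultimately have "z \<in> X closure_of {w}" using z by blast
    hence "X closure_of {z} \<subseteq> X closure_of {w}"
      by (intro closure_of_minimal) auto
    with w have "X closure_of {w} = X closure_of {z}" by auto
    thus "w = z" using t0[unfolded t0_space_closure_of_sing] w z Ctop by auto
  qed (rule z)
qed

lemma box_gen:
  assumes "generate_topology_on {box X U | U. openin X U} W" "K \<in> W"
  shows "\<exists>U. openin X U \<and> K \<in> box X U \<and> box X U \<subseteq> W"
  using assms
proof (induction arbitrary: K rule: generate_topology_on.induct)
  case Empty then show ?case by simp
next
  case (Int a b)
  then obtain U1 U2 where "openin X U1" "K \<in> box X U1" "box X U1 \<subseteq> a"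
    "openin X U2" "K \<in> box X U2" "box X U2 \<subseteq> b" by blast
  have o: "openin X (U1 \<inter> U2)" using \<open>openin X U1\<close> \<open>openin X U2\<close> by (rule openin_Int)
  have e: "box X (U1 \<inter> U2) = box X U1 \<inter> box X U2" unfolding box_def by blast
  show ?case using o e \<open>K \<in> box X U1\<close> \<open>K \<in> box X U2\<close> \<open>box X U1 \<subseteq> a\<close> \<open>box X U2 \<subseteq> b\<close>
    by blast
next
  case (UN Ks)
  then obtain k where k: "k \<in> Ks" "K \<in> k" by auto
  then obtain U where "openin X U" "K \<in> box X U" "box X U \<subseteq> k" using UN.IH by blast
  moreover have "k \<subseteq> \<Union>Ks" using k(1) by (rule Union_upper)
  ultimately show ?case by blast
next
  case (Basis s) then show ?case by auto
qed

lemma zmin2_lem: assumes oG: "openin X G" and zG: "z \<notin> G" and zmin: "\<forall>w\<in>K - G. X closure_of {w} \<subseteq> X closure_of {z} \<longrightarrow> w = z"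
  shows "\<forall>w\<in>K. spec_le X w z \<longrightarrow> w = z"
      proof (intro ballI impI)
        fix w assume w: "w \<in> K" "spec_le X w z"
        hence wc: "w \<in> X closure_of {z}" by (simp add: spec_le_def)
        have "w \<notin> G"
        proof
          assume wG: "w \<in> G"
          from wc have "\<forall>T. w \<in> T \<and> openin X T \<longrightarrow> (\<exists>y. y \<in> {z} \<and> y \<in> T)"
            unfolding in_closure_of by blast
          hence "\<exists>y. y \<in> {z} \<and> y \<in> G" using wG oG by blast
          hence "z \<in> G" by blast
          thus False using zG by blast
        qed
        hence wKG: "w \<in> K - G" using w(1) by blast
        have "{w} \<subseteq> X closure_of {z}" using wc by blast
        hence "X closure_of {w} \<subseteq> X closure_of {z}" by (intro closure_of_minimal) auto
        thus "w = z" using zmin wKG by blast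
      qed

theorem mainTheorem3:
  fixes X :: "'a topology"
  assumes "first_countable X"
    and "t0_space X"
    and "\<forall>K \<in> KX X. countable (min_elems X K)"
  shows "first_countable (smyth X)"
  unfolding first_countable_def
proof (intro ballI)
  fix K assume "K \<in> topspace (smyth X)"
  hence KK: "K \<in> KX X" by (auto simp: smyth_def box_def)
  hence Kc: "compactin X K" and Ksat: "saturated_in X K" by (auto simp: KX_def)
  have Ktop: "K \<subseteq> topspace X" using Kc compactin_subset_topspace by blast
  define M where "M = min_elems X K"
  have cM: "countable M" using assms(3) KK M_def by auto
  have MK: "M \<subseteq> K" by (auto simp: M_def min_elems_def)
  have "\<forall>m\<in>M. \<exists>\<B>. countable \<B> \<and> (\<forall>V \<in> \<B>. openin X V) \<and>
             (\<forall>U. openin X U \<and> m \<in> U \<longrightarrow> (\<exists>V \<in> \<B>. m \<in> V \<and> V \<subseteq> U))"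
    using assms(1) MK Ktop unfolding first_countable_def by blast
  then obtain bb where bb: "\<And>m. m \<in> M \<Longrightarrow> countable (bb m) \<and> (\<forall>V \<in> bb m. openin X V) \<and>
             (\<forall>U. openin X U \<and> m \<in> U \<longrightarrow> (\<exists>V \<in> bb m. m \<in> V \<and> V \<subseteq> U))"
    by metis
  define N where "N = \<Union>(bb ` M)"
  have cN: "countable N" using cM bb N_def by auto
  have oN: "\<And>V. V \<in> N \<Longrightarrow> openin X V" using bb N_def by auto
  define \<B> where "\<B> = (\<lambda>F. box X (\<Union>F)) ` {F. finite F \<and> F \<subseteq> N}"
  show "\<exists>\<B>. countable \<B> \<and> (\<forall>V \<in> \<B>. openin (smyth X) V) \<and>
             (\<forall>U. openin (smyth X) U \<and> K \<in> U \<longrightarrow> (\<exists>V \<in> \<B>. K \<in> V \<and> V \<subseteq> U))"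
  proof (intro exI[of _ \<B>] conjI ballI allI impI)
    show "countable \<B>" unfolding \<B>_def using countable_Collect_finite_subset[OF cN] by simp
  next
    fix V assume "V \<in> \<B>"
    then obtain F where F: "finite F" "F \<subseteq> N" "V = box X (\<Union>F)" using \<B>_def by auto
    have "openin X (\<Union>F)"
    proof (rule openin_Union)
      fix S assume "S \<in> F" thus "openin X S" using F(2) oN by blast
    qed
    hence "box X (\<Union>F) \<in> {box X U | U. openin X U}" by blast
    hence "openin (topology_generated_by {box X U | U. openin X U}) (box X (\<Union>F))"
      by (rule topology_generated_by_Basis)
    thus "openin (smyth X) V" unfolding smyth_def F(3) .
  next
    fix W assume W: "openin (smyth X) W \<and> K \<in> W"
    hence "generate_topology_on {box X U | U. openin X U} W"
      unfolding smyth_def by (simp add: openin_topology_generated_by_iff)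
    moreover have "K \<in> W" using W by blast
    ultimately obtain U where U: "openin X U" "K \<in> box X U" "box X U \<subseteq> W"
      by (rule box_gen[elim_format]) blast
    have KU: "K \<subseteq> U" using U by (auto simp: box_def)
    define G where "G = \<Union>{V\<in>N. V \<subseteq> U}"
    have oG: "openin X G" using oN G_def by auto
    have KG: "K \<subseteq> G"
    proof (rule ccontr)
      assume "\<not> K \<subseteq> G"
      hence ne: "K - G \<noteq> {}" by blast
      have cl: "closedin X (topspace X - G)" using oG by (rule closedin_diff[OF closedin_topspace])
      have eq: "(topspace X - G) \<inter> K = K - G" using Ktop by blast
      have cC: "compactin X (K - G)" using closed_Int_compactin[OF cl Kc] unfolding eq .
      obtain z where z: "z \<in> K - G" and zmin: "\<forall>w\<in>K - G. X closure_of {w} \<subseteq> X closure_of {z} \<longrightarrow> w = z"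
        using min_exists[OF assms(2) cC ne] by blast
      have zK: "z \<in> K" and zG: "z \<notin> G" using z by auto
      have zmin2: "\<forall>w\<in>K. spec_le X w z \<longrightarrow> w = z" using zmin2_lem[OF oG zG zmin] .
      have zM: "z \<in> M" unfolding M_def min_elems_def using zK zmin2 by blast
      have zU: "z \<in> U" using zK KU by blast
      have "\<forall>U. openin X U \<and> z \<in> U \<longrightarrow> (\<exists>V \<in> bb z. z \<in> V \<and> V \<subseteq> U)"
        using bb[OF zM] by blast
      then obtain V where V: "V \<in> bb z" "z \<in> V" "V \<subseteq> U" using U(1) zU by blast
      have "V \<in> N" unfolding N_def using V(1) zM by blast
      hence "z \<in> G" unfolding G_def using V by blast
      thus False using zG by blast
    qed
    have c1: "(\<forall>S\<in>{V\<in>N. V \<subseteq> U}. openin X S) \<and> K \<subseteq> \<Union>{V\<in>N. V \<subseteq> U}"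
      using oN KG unfolding G_def by blast
    have "\<exists>F. finite F \<and> F \<subseteq> {V\<in>N. V \<subseteq> U} \<and> K \<subseteq> \<Union>F"
      using Kc[unfolded compactin_def, THEN conjunct2, rule_format, OF c1] .
    then obtain F where F: "finite F" "F \<subseteq> {V\<in>N. V \<subseteq> U}" "K \<subseteq> \<Union>F"
      by blast
    show "\<exists>V\<in>\<B>. K \<in> V \<and> V \<subseteq> W"
    proof (intro bexI conjI)
      show "box X (\<Union>F) \<in> \<B>" using F \<B>_def by auto
      show "K \<in> box X (\<Union>F)" using KK F by (auto simp: box_def)
      have "\<Union>F \<subseteq> U" using F(2) by blast
      hence "box X (\<Union>F) \<subseteq> box X U" unfolding box_def by blast
      thus "box X (\<Union>F) \<subseteq> W" using U(3) by (rule order_trans)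
    qed
  qed
qed

end
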